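(* Let $m$ be odd and let $Q_{4m}=\langle a,b\mid a^{2m}=e,\ a^m=b^2,\ b^{-1}ab=a^{-1}\rangle$ be the dicyclic group of order $4m$; set $n=2m$. Then there is no inverse-closed subset $S\subseteq Q_{4m}\setminus\{e\}$ such that $\mathrm{Cay}(Q_{4m},S)$ is a non-trivial bipartite distance-regular graph with diameter $3$, i.e., a distance-regular graph with intersection array $\{k,k-1,k-\mu;1,\mu,k\}$ with $k<n-1$.
   Context: For a finite group $G$ with identity $e$ and a subset $S\subseteq G\setminus\{e\}$ with $S=S^{-1}$, the Cayley graph $\mathrm{Cay}(G,S)$ has vertex set $G$, two vertices $a,b$ being adjacent iff $ab^{-1}\in S$. A connected graph of diameter $d$ is distance-regular with intersection array $\{b_0,\dots,b_{d-1};c_1,\dots,c_d\}$ if for all vertices $x,y$ at distance $i$, the number of neighbours of $x$ at distance $i+1$ (resp. $i-1$) from $y$ is $b_i$ (resp. $c_i$). *)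

theory Defs
  imports "HOL-Algebra.Algebra"
begin

fun walk_len :: "('v \<Rightarrow> 'v \<Rightarrow> bool) \<Rightarrow> nat \<Rightarrow> 'v \<Rightarrow> 'v \<Rightarrow> bool" where
  "walk_len adj 0 x y = (x = y)"
| "walk_len adj (Suc n) x y = (\<exists>z. adj x z \<and> walk_len adj n z y)"

definition gconnected :: "'v set \<Rightarrow> ('v \<Rightarrow> 'v \<Rightarrow> bool) \<Rightarrow> bool" where
  "gconnected V adj \<longleftrightarrow> (\<forall>x\<in>V. \<forall>y\<in>V. \<exists>n. walk_len adj n x y)"

definition gdist :: "('v \<Rightarrow> 'v \<Rightarrow> bool) \<Rightarrow> 'v \<Rightarrow> 'v \<Rightarrow> nat" where
  "gdist adj x y = (LEAST n. walk_len adj n x y)"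

definition gdiameter :: "'v set \<Rightarrow> ('v \<Rightarrow> 'v \<Rightarrow> bool) \<Rightarrow> nat \<Rightarrow> bool" where
  "gdiameter V adj d \<longleftrightarrow> (\<forall>x\<in>V. \<forall>y\<in>V. gdist adj x y \<le> d) \<and>
      (\<exists>x\<in>V. \<exists>y\<in>V. gdist adj x y = d)"

text \<open>Distance-regular of diameter d with intersection array
  {b 0, ..., b (d-1); c 1, ..., c d}.\<close>
definition distance_regular ::
  "'v set \<Rightarrow> ('v \<Rightarrow> 'v \<Rightarrow> bool) \<Rightarrow> nat \<Rightarrow> (nat \<Rightarrow> nat) \<Rightarrow> (nat \<Rightarrow> nat) \<Rightarrow> bool" where
  "distance_regular V adj d b c \<longleftrightarrow>
     gconnected V adj \<and> gdiameter V adj d \<and>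
     (\<forall>x\<in>V. \<forall>y\<in>V. \<forall>i.
        gdist adj x y = i \<longrightarrow>
        (i < d \<longrightarrow> card {z\<in>V. adj x z \<and> gdist adj z y = i + 1} = b i) \<and>
        (1 \<le> i \<and> i \<le> d \<longrightarrow> card {z\<in>V. adj x z \<and> gdist adj z y = i - 1} = c i))"

definition cayley_adj :: "('a, 'b) monoid_scheme \<Rightarrow> 'a set \<Rightarrow> 'a \<Rightarrow> 'a \<Rightarrow> bool" where
  "cayley_adj G S x y \<longleftrightarrow> x \<in> carrier G \<and> y \<in> carrier G \<and> x \<otimes>\<^bsub>G\<^esub> inv\<^bsub>G\<^esub> y \<in> S"

definition is_dicyclic :: "('a, 'b) monoid_scheme \<Rightarrow> nat \<Rightarrow> 'a \<Rightarrow> 'a \<Rightarrow> bool" where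
  "is_dicyclic G m a b \<longleftrightarrow> group G \<and> a \<in> carrier G \<and> b \<in> carrier G \<and>
     carrier G = generate G {a, b} \<and> card (carrier G) = 4 * m \<and>
     a [^]\<^bsub>G\<^esub> (2 * m) = \<one>\<^bsub>G\<^esub> \<and> a [^]\<^bsub>G\<^esub> m = b [^]\<^bsub>G\<^esub> (2::nat) \<and>
     inv\<^bsub>G\<^esub> b \<otimes>\<^bsub>G\<^esub> a \<otimes>\<^bsub>G\<^esub> b = inv\<^bsub>G\<^esub> a"

end

theory Submission
  imports Defs
begin



lemma walk_trans: "walk_len adj n x y \<Longrightarrow> walk_len adj n' y z \<Longrightarrow> walk_len adj (n+n') x z"
  by (induction n arbitrary: x) auto

locale drg3 =
  fixes V :: "'v set" and adj :: "'v \<Rightarrow> 'v \<Rightarrow> bool" and k \<mu> :: nat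
  assumes fin: "finite V"
  and sym: "adj x y \<Longrightarrow> adj y x"
  and irr: "\<not> adj x x"
  and inV: "adj x y \<Longrightarrow> x \<in> V"
  and drg: "distance_regular V adj 3 (\<lambda>i. if i = 0 then k else if i = 1 then k - 1 else k - \<mu>)
              (\<lambda>i. if i = 1 then 1 else if i = 2 then \<mu> else k)"
begin

lemma inV2: "adj x y \<Longrightarrow> y \<in> V" using inV sym by blast

lemma conn: "x \<in> V \<Longrightarrow> y \<in> V \<Longrightarrow> \<exists>n. walk_len adj n x y"
  using drg unfolding distance_regular_def gconnected_def by blast

lemma diam: "x \<in> V \<Longrightarrow> y \<in> V \<Longrightarrow> gdist adj x y \<le> 3"
  using drg unfolding distance_regular_def gdiameter_def by blast

lemma diam3: "\<exists>x\<in>V. \<exists>y\<in>V. gdist adj x y = 3"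
  using drg unfolding distance_regular_def gdiameter_def by blast

lemma bset: "x \<in> V \<Longrightarrow> y \<in> V \<Longrightarrow> gdist adj x y = i \<Longrightarrow> i < 3 \<Longrightarrow>
   card {z\<in>V. adj x z \<and> gdist adj z y = i + 1} = (if i = 0 then k else if i = 1 then k - 1 else k - \<mu>)"
  using drg unfolding distance_regular_def by blast

lemma cset: "x \<in> V \<Longrightarrow> y \<in> V \<Longrightarrow> gdist adj x y = i \<Longrightarrow> 1 \<le> i \<Longrightarrow> i \<le> 3 \<Longrightarrow>
   card {z\<in>V. adj x z \<and> gdist adj z y = i - 1} = (if i = 1 then 1 else if i = 2 then \<mu> else k)"
  using drg unfolding distance_regular_def by blast

lemma gd_le: "walk_len adj n x y \<Longrightarrow> gdist adj x y \<le> n"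
  unfolding gdist_def by (rule Least_le)

lemma gd_walk: "x \<in> V \<Longrightarrow> y \<in> V \<Longrightarrow> walk_len adj (gdist adj x y) x y"
  unfolding gdist_def using conn by (metis LeastI)

lemma gd0: "x \<in> V \<Longrightarrow> y \<in> V \<Longrightarrow> gdist adj x y = 0 \<longleftrightarrow> x = y"
  using gd_walk[of x y] gd_le[of 0 x x] by auto

lemma gd1: "x \<in> V \<Longrightarrow> y \<in> V \<Longrightarrow> gdist adj x y = 1 \<longleftrightarrow> adj x y"
proof
  assume "x \<in> V" "y \<in> V" "gdist adj x y = 1"
  then show "adj x y" using gd_walk[of x y] by auto
next
  assume "x \<in> V" "y \<in> V" "adj x y"
  then have "gdist adj x y \<le> 1" using gd_le[of 1 x y] by auto
  moreover have "x \<noteq> y" using irr \<open>adj x y\<close> by auto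
  ultimately show "gdist adj x y = 1" using gd0 \<open>x \<in> V\<close> \<open>y \<in> V\<close> by fastforce
qed

lemma gd_tri: "adj x z \<Longrightarrow> y \<in> V \<Longrightarrow> gdist adj x y \<le> gdist adj z y + 1"
proof -
  assume a: "adj x z" "y \<in> V"
  then have "z \<in> V" using inV2 by blast
  then have "walk_len adj (Suc (gdist adj z y)) x y" using gd_walk[of z y] a by auto
  then show ?thesis using gd_le by fastforce
qed

lemma deg: "x \<in> V \<Longrightarrow> card {z\<in>V. adj x z} = k"
proof -
  assume x: "x \<in> V"
  have "card {z\<in>V. adj x z \<and> gdist adj z x = 0 + 1} = k"
    using bset[OF x x, of 0] gd0[OF x x] by simp
  moreover have "{z\<in>V. adj x z \<and> gdist adj z x = 0 + 1} = {z\<in>V. adj x z}"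
    using gd1 x sym by auto
  ultimately show ?thesis by simp
qed

lemma noflat: assumes xy: "adj x y" and e: "e \<in> V" shows "gdist adj x e \<noteq> gdist adj y e"
proof
  assume eq: "gdist adj x e = gdist adj y e"
  define i where "i = gdist adj x e"
  have x: "x \<in> V" and y: "y \<in> V" using xy inV inV2 by auto
  have i3: "i \<le> 3" using diam[OF x e] i_def by simp
  have i0: "i \<noteq> 0"
  proof
    assume "i = 0" then have "x = e" "y = e" using gd0[OF x e] gd0[OF y e] eq i_def by auto
    then show False using xy irr by simp
  qed
  define N where "N = {z\<in>V. adj x z}"
  define B where "B = {z\<in>V. adj x z \<and> gdist adj z e = i + 1}"
  define C where "C = {z\<in>V. adj x z \<and> gdist adj z e = i - 1}"
  have cN: "card N = k" using deg[OF x] N_def by simp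
  have fN: "finite N" using fin N_def by simp
  have sub: "B \<union> C \<union> {y} \<subseteq> N" using B_def C_def N_def y xy by auto
  have disj: "B \<inter> C = {}" "y \<notin> B" "y \<notin> C" using B_def C_def i0 eq i_def by auto
  have "card (B \<union> C \<union> {y}) = card B + card C + 1"
  proof -
    have fB: "finite B" "finite C" using fN sub finite_subset by auto
    then have "card (B \<union> C) = card B + card C" using disj card_Un_disjoint by blast
    moreover have "y \<notin> B \<union> C" using disj by simp
    ultimately show ?thesis using fB by simp
  qed
  then have le: "card B + card C + 1 \<le> k" using card_mono[OF fN sub] cN by simp
  have cC: "card C = (if i = 1 then 1 else if i = 2 then \<mu> else k)"
    using cset[OF x e, of i] i_def i0 i3 C_def by simp
  have cB: "i < 3 \<Longrightarrow> card B = (if i = 0 then k else if i = 1 then k - 1 else k - \<mu>)"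
    using bset[OF x e, of i] i_def B_def by simp
  have "i = 3 \<Longrightarrow> B = {}" using diam e B_def by fastforce
  then have "card B + card C = k"
  proof -
    assume B3: "i = 3 \<Longrightarrow> B = {}"
    consider "i = 1" | "i = 2" | "i = 3" using i0 i3 by linarith
    then show ?thesis
    proof cases
      case 1 then have "card B = k - 1" "card C = 1" using cB cC by auto
      then show ?thesis using le by linarith
    next
      case 2 then have "card B = k - \<mu>" "card C = \<mu>" using cB cC by auto
      then show ?thesis using le by linarith
    next
      case 3 then have "card B = 0" "card C = k" using B3 cC by auto
      then show ?thesis by linarith
    qed
  qed
  then show False using le by linarith
qed

lemma par_aux: "(a::nat) = b + 1 \<or> b = a + 1 \<Longrightarrow> even (b + n + c) \<Longrightarrow> even (a + Suc n + c)"
  by presburger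

lemma parity: "walk_len adj n x y \<Longrightarrow> x \<in> V \<Longrightarrow> e \<in> V \<Longrightarrow> even (gdist adj x e + n + gdist adj y e)"
proof (induction n arbitrary: x)
  case 0 then show ?case by simp
next
  case (Suc n)
  then obtain z where z: "adj x z" "walk_len adj n z y" by auto
  have "z \<in> V" using z inV2 by auto
  then have IH: "even (gdist adj z e + n + gdist adj y e)" using Suc z by auto
  have "gdist adj x e \<le> gdist adj z e + 1" "gdist adj z e \<le> gdist adj x e + 1"
    "gdist adj x e \<noteq> gdist adj z e"
    using gd_tri[OF z(1) Suc.prems(3)] gd_tri[OF sym[OF z(1)] Suc.prems(3)] noflat[OF z(1) Suc.prems(3)]
    by auto
  then have "gdist adj x e = gdist adj z e + 1 \<or> gdist adj z e = gdist adj x e + 1" by linarith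
  then show ?case using IH par_aux by blast
qed

lemma parity2: "walk_len adj n x y \<Longrightarrow> walk_len adj n' x y \<Longrightarrow> x \<in> V \<Longrightarrow> even (n + n')"
  using parity[of n x y x] parity[of n' x y x] by auto

lemma main: assumes e: "e \<in> V" and c: "c \<in> V" and d2: "gdist adj e c = 2"
  and nb: "\<And>z. adj e z \<Longrightarrow> adj z c" shows False
proof -
  have "card {z\<in>V. adj e z \<and> gdist adj z c = 2 - 1} = \<mu>"
    using cset[OF e c d2] by simp
  moreover have "{z\<in>V. adj e z \<and> gdist adj z c = 2 - 1} = {z\<in>V. adj e z}"
    using nb gd1 c by auto
  ultimately have mk: "\<mu> = k" using deg[OF e] by simp
  obtain x y where xy: "x \<in> V" "y \<in> V" "gdist adj x y = 3" using diam3 by blast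
  have "walk_len adj 3 x y" using gd_walk[OF xy(1,2)] xy(3) by simp
  then obtain z where z: "adj x z" "walk_len adj 2 z y" by (auto simp: numeral_eq_Suc)
  have zV: "z \<in> V" using z inV2 by auto
  have "gdist adj z y \<le> 2" using gd_le[OF z(2)] .
  moreover have "3 \<le> gdist adj z y + 1" using gd_tri[OF z(1) xy(2)] xy(3) by simp
  ultimately have z2: "gdist adj z y = 2" by simp
  have "card {w\<in>V. adj z w \<and> gdist adj w y = 2 + 1} = k - \<mu>"
    using bset[OF zV xy(2) z2] by simp
  then have "card {w\<in>V. adj z w \<and> gdist adj w y = 3} = 0" using mk by simp
  moreover have "x \<in> {w\<in>V. adj z w \<and> gdist adj w y = 3}" using xy z sym by auto
  ultimately show False using fin by auto
qed

end



locale dic = group G for G (structure) +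
  fixes a b :: 'a and m :: nat
  assumes a: "a \<in> carrier G" and b: "b \<in> carrier G"
  and rel1: "inv b \<otimes> a \<otimes> b = inv a"
  and bb: "b \<otimes> b = a [^] (int m)"
begin

lemma conj_pow: "inv b \<otimes> a [^] (i::int) \<otimes> b = a [^] (-i)"
proof -
  define h where "h = (\<lambda>x. inv b \<otimes> x \<otimes> b)"
  have hom: "h \<in> hom G G"
  proof -
    have rc: "\<And>z. z \<in> carrier G \<Longrightarrow> b \<otimes> (inv b \<otimes> z) = z"
      using b by (simp add: m_assoc[symmetric])
    show ?thesis unfolding hom_def h_def using b by (auto simp: m_assoc rc)
  qed
  have "h (a [^] i) = (h a) [^] i" using hom_int_pow[OF hom a is_group is_group] .
  also have "h a = inv a" using rel1 h_def by simp
  finally show ?thesis using h_def a by (simp add: int_pow_inv int_pow_neg)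
qed

lemma comm: "b \<otimes> a [^] (j::int) = a [^] (-j) \<otimes> b"
proof -
  have "b \<otimes> (inv b \<otimes> a [^] (-j) \<otimes> b) = a [^] (-j) \<otimes> b"
    using a b by (simp add: m_assoc[symmetric])
  then show ?thesis using conj_pow[of "-j"] by simp
qed

lemma prod1: "a [^] (i::int) \<otimes> b \<otimes> a [^] (j::int) = a [^] (i - j) \<otimes> b"
proof -
  have "a [^] (i - j) = a [^] i \<otimes> a [^] (-j)" using a int_pow_mult[of a i "-j"] by simp
  then show ?thesis using a b by (simp add: m_assoc comm)
qed

lemma prod2: "(a [^] (i::int) \<otimes> b) \<otimes> (a [^] (j::int) \<otimes> b) = a [^] (i - j + int m)"
proof -
  have "(a [^] i \<otimes> b) \<otimes> (a [^] j \<otimes> b) = (a [^] i \<otimes> b \<otimes> a [^] j) \<otimes> b"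
    using a b by (simp add: m_assoc)
  also have "\<dots> = a [^] (i - j) \<otimes> (b \<otimes> b)" using a b by (simp add: prod1 m_assoc)
  also have "\<dots> = a [^] (i - j + int m)" using a by (simp add: bb int_pow_mult)
  finally show ?thesis .
qed

lemma invb: "inv b = a [^] (- int m) \<otimes> b"
proof (rule inv_equality)
  show "a [^] (- int m) \<otimes> b \<otimes> b = \<one>"
    using a b by (simp add: m_assoc bb int_pow_mult[symmetric])
qed (use a b in auto)

definition T where "T = {x. \<exists>i::int. x = a [^] i} \<union> {x. \<exists>i::int. x = a [^] i \<otimes> b}"

lemma gen_T: "x \<in> generate G {a, b} \<Longrightarrow> x \<in> T"
proof (induction rule: generate.induct)
  case one
  then show ?case unfolding T_def by (auto intro: exI[of _ 0])
next
  case (incl h)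
  then show ?case unfolding T_def using a b
    by (auto intro: exI[of _ 1] exI[of _ 0])
next
  case (inv h)
  then show ?case unfolding T_def using a b invb
    by (auto intro: exI[of _ "-1"] exI[of _ "- int m"] simp: int_pow_neg)
next
  case (eng h1 h2)
  from eng.IH(1) eng.IH(2) show ?case unfolding T_def
  proof (elim UnE CollectE exE)
    fix i j :: int assume "h1 = a [^] i" "h2 = a [^] j"
    then show "h1 \<otimes> h2 \<in> {x. \<exists>i::int. x = a [^] i} \<union> {x. \<exists>i::int. x = a [^] i \<otimes> b}"
      using a by (auto simp: int_pow_mult[symmetric])
  next
    fix i j :: int assume "h1 = a [^] i" "h2 = a [^] j \<otimes> b"
    then show "h1 \<otimes> h2 \<in> {x. \<exists>i::int. x = a [^] i} \<union> {x. \<exists>i::int. x = a [^] i \<otimes> b}"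
      using a b by (auto simp: int_pow_mult[symmetric] m_assoc[symmetric])
  next
    fix i j :: int assume "h1 = a [^] i \<otimes> b" "h2 = a [^] j"
    then show "h1 \<otimes> h2 \<in> {x. \<exists>i::int. x = a [^] i} \<union> {x. \<exists>i::int. x = a [^] i \<otimes> b}"
      using prod1 by auto
  next
    fix i j :: int assume "h1 = a [^] i \<otimes> b" "h2 = a [^] j \<otimes> b"
    then show "h1 \<otimes> h2 \<in> {x. \<exists>i::int. x = a [^] i} \<union> {x. \<exists>i::int. x = a [^] i \<otimes> b}"
      using prod2 by auto
  qed
qed

lemma pow_mod: assumes "a [^] (int n) = \<one>" shows "a [^] (i::int) = a [^] (i mod int n)"
proof -
  have "a [^] i = a [^] (int n * (i div int n) + i mod int n)" by simp
  also have "\<dots> = (a [^] (int n)) [^] (i div int n) \<otimes> a [^] (i mod int n)"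
    using a int_pow_mult[of a "int n * (i div int n)" "i mod int n"] int_pow_pow[of a "int n" "i div int n"] by simp
  finally show ?thesis using assms a by simp
qed

lemma T_card: assumes "a [^] (int m) = \<one>" "m > 0" shows "card T \<le> 2 * m"
proof -
  have "T \<subseteq> (\<lambda>j. a [^] j) ` {0..<int m} \<union> (\<lambda>j. a [^] j \<otimes> b) ` {0..<int m}"
  proof
    fix x assume "x \<in> T"
    have r: "i mod int m \<in> {0..<int m}" for i using assms(2) by simp
    from \<open>x \<in> T\<close> show "x \<in> (\<lambda>j. a [^] j) ` {0..<int m} \<union> (\<lambda>j. a [^] j \<otimes> b) ` {0..<int m}"
      unfolding T_def
    proof (elim UnE CollectE exE)
      fix i :: int assume "x = a [^] i"
      then have "x = a [^] (i mod int m)" using pow_mod[OF assms(1)] by simp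
      then show ?thesis using r[of i] by blast
    next
      fix i :: int assume "x = a [^] i \<otimes> b"
      then have "x = a [^] (i mod int m) \<otimes> b" using pow_mod[OF assms(1)] by simp
      then show ?thesis using r[of i] by blast
    qed
  qed
  then have "card T \<le> card ((\<lambda>j. a [^] j) ` {0..<int m} \<union> (\<lambda>j. a [^] j \<otimes> b) ` {0..<int m})"
    by (intro card_mono) auto
  also have "\<dots> \<le> card ((\<lambda>j. a [^] j) ` {0..<int m}) + card ((\<lambda>j. a [^] j \<otimes> b) ` {0..<int m})"
    by (rule card_Un_le)
  also have "\<dots> \<le> m + m"
    by (intro add_mono) (metis card_atLeastLessThan_int card_image_le diff_zero finite_atLeastLessThan_int nat_int)+
  finally show ?thesis by simp
qed

end



context group begin

lemma rcanc: "g \<in> carrier G \<Longrightarrow> w \<in> carrier G \<Longrightarrow> g \<otimes> (inv g \<otimes> w) = w"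
  by (simp add: m_assoc[symmetric])

lemma cay_adj_step: "inv t \<in> S \<Longrightarrow> t \<in> carrier G \<Longrightarrow> x \<in> carrier G \<Longrightarrow> cayley_adj G S x (t \<otimes> x)"
  unfolding cayley_adj_def by (simp add: inv_mult_group m_assoc[symmetric])

lemma cay_walk_pow: "inv t \<in> S \<Longrightarrow> t \<in> carrier G \<Longrightarrow> x \<in> carrier G \<Longrightarrow>
  walk_len (cayley_adj G S) n x (t [^] n \<otimes> x)"
proof (induction n arbitrary: x)
  case 0 then show ?case by simp
next
  case (Suc n)
  have "walk_len (cayley_adj G S) n (t \<otimes> x) (t [^] n \<otimes> (t \<otimes> x))" using Suc by simp
  moreover have "t [^] n \<otimes> (t \<otimes> x) = t [^] Suc n \<otimes> x" using Suc by (simp add: m_assoc)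
  ultimately show ?case using cay_adj_step[OF Suc.prems] by auto
qed

lemma cay_rmult: "walk_len (cayley_adj G S) n x y \<Longrightarrow> g \<in> carrier G \<Longrightarrow>
  walk_len (cayley_adj G S) n (x \<otimes> g) (y \<otimes> g)"
proof (induction n arbitrary: x)
  case 0 then show ?case by simp
next
  case (Suc n)
  then obtain z where z: "cayley_adj G S x z" "walk_len (cayley_adj G S) n z y" by auto
  have "cayley_adj G S (x \<otimes> g) (z \<otimes> g)" using z(1) Suc.prems(2)
    unfolding cayley_adj_def by (simp add: inv_mult_group m_assoc rcanc)
  then show ?case using Suc z by auto
qed

end




lemma ar: "(2*q + r) * int m = int (2*m)*q + int m * (r::int)" by (simp add: algebra_simps)

lemma (in group) main_lem:
  assumes odd: "odd m" and a: "a \<in> carrier G" and b: "b \<in> carrier G"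
    and gen: "carrier G = generate G {a, b}" and crd: "card (carrier G) = 4 * m"
    and p2m: "a [^] (2 * m) = \<one>" and ab: "a [^] m = b [^] (2::nat)"
    and rel: "inv b \<otimes> a \<otimes> b = inv a"
    and S: "S \<subseteq> carrier G - {\<one>}" and Sinv: "\<forall>s\<in>S. inv s \<in> S"
    and DR: "distance_regular (carrier G) (cayley_adj G S) 3
              (\<lambda>i. if i = 0 then k else if i = 1 then k - 1 else k - \<mu>)
              (\<lambda>i. if i = 1 then 1 else if i = 2 then \<mu> else k)"
  shows False
proof -
  have m0: "m > 0" using odd by (cases m) auto
  have bb': "b \<otimes> b = a [^] (int m)" using ab b by (simp add: int_pow_int numeral_2_eq_2)
  interpret dic G a b m by unfold_locales (rule a, rule b, rule rel, rule bb')
  have "card (carrier G) > 0" using crd m0 by simp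
  then have fin: "finite (carrier G)" by (rule card_ge_0_finite)
  let ?adj = "cayley_adj G S"
  interpret D: drg3 "carrier G" ?adj k \<mu>
  proof
    show "finite (carrier G)" by (rule fin)
  next
    fix x y assume "?adj x y"
    then have "x \<in> carrier G" "y \<in> carrier G" "x \<otimes> inv y \<in> S" unfolding cayley_adj_def by auto
    moreover then have "y \<otimes> inv x = inv (x \<otimes> inv y)" by (simp add: inv_mult_group)
    ultimately show "?adj y x" using Sinv unfolding cayley_adj_def by auto
  next
    fix x show "\<not> ?adj x x" using S unfolding cayley_adj_def by auto
  next
    fix x y assume "?adj x y" then show "x \<in> carrier G" unfolding cayley_adj_def by auto
  qed (rule DR)
  define c where "c = a [^] (int m)"
  have cC: "c \<in> carrier G" using a c_def by simp
  have cc: "c \<otimes> c = \<one>"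
  proof -
    have "c \<otimes> c = a [^] (int m + int m)" using a c_def int_pow_mult[of a "int m" "int m"] by simp
    also have "\<dots> = a [^] (2 * m)" by (metis int_pow_int mult_2 of_nat_add)
    finally show ?thesis using p2m by simp
  qed
  have invc: "inv c = c" using cc cC by (simp add: inv_equality)
  have cne: "c \<noteq> \<one>"
  proof
    assume "c = \<one>"
    then have "card T \<le> 2 * m" using T_card m0 c_def by simp
    moreover have "carrier G \<subseteq> T" using gen gen_T by auto
    moreover have "T \<subseteq> carrier G" unfolding T_def using a b by auto
    ultimately show False using crd m0 by auto
  qed
  obtain n where wb: "walk_len ?adj n \<one> b" using D.conn b by blast
  have "walk_len ?adj n (\<one> \<otimes> b) (b \<otimes> b)" using cay_rmult[OF wb b] .
  then have "walk_len ?adj n b c" using b bb' c_def by simp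
  then have wc: "walk_len ?adj (n + n) \<one> c" using walk_trans[OF wb] by blast
  have cS: "c \<notin> S"
  proof
    assume "c \<in> S"
    then have "?adj \<one> c" using cC invc unfolding cayley_adj_def by simp
    then have "walk_len ?adj 1 \<one> c" by simp
    then have "even (1 + (n + n))" using D.parity2[OF _ wc] by blast
    then show False by simp
  qed
  have btype: "s \<otimes> s = c" if s: "s \<in> S" for s
  proof -
    have sC: "s \<in> carrier G" using s S by auto
    then have "s \<in> T" using gen gen_T by auto
    then show ?thesis unfolding T_def
    proof (elim UnE CollectE exE)
      fix i :: int assume si: "s = a [^] i"
      have ws: "walk_len ?adj m \<one> (s [^] m \<otimes> \<one>)"
        using cay_walk_pow[of s S "\<one>" m] Sinv s sC by simp
      have "s [^] m = a [^] (i * int m)" using si a by (simp add: int_pow_pow int_pow_int[symmetric])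
      also have "i * int m = int (2*m) * (i div 2) + int m * (i mod 2)"
        using ar[of "i div 2" "i mod 2" m] by simp
      also have "a [^] \<dots> = (a [^] int (2*m)) [^] (i div 2) \<otimes> a [^] (int m * (i mod 2))"
        using a by (simp add: int_pow_mult int_pow_pow)
      also have "\<dots> = a [^] (int m * (i mod 2))"
      proof -
        have "a [^] int (2*m) = \<one>" using p2m by (simp only: int_pow_int)
        then show ?thesis using a by simp
      qed
      finally have sm: "s [^] m = a [^] (int m * (i mod 2))" .
      show ?thesis
      proof (cases "i mod 2 = 0")
        case True
        then have "walk_len ?adj m \<one> \<one>" using ws sm a by simp
        then have "even (m + 0)" using D.parity2[of m "\<one>" "\<one>" 0] by simp
        then show ?thesis using odd by simp
      next
        case False
        then have "i mod 2 = 1" by presburger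
        then have "walk_len ?adj m \<one> c" using ws sm c_def a by simp
        then have "even (m + (n + n))" using D.parity2[OF _ wc] by blast
        then show ?thesis using odd by simp
      qed
    next
      fix i :: int assume "s = a [^] i \<otimes> b"
      then show ?thesis using prod2[of i i] c_def by simp
    qed
  qed
  have sc: "s \<otimes> c \<in> S" if s: "s \<in> S" for s
  proof -
    have sC: "s \<in> carrier G" using s S by auto
    have "s \<otimes> c \<otimes> s = s \<otimes> (s \<otimes> s) \<otimes> s" using btype[OF s] by simp
    also have "\<dots> = (s \<otimes> s) \<otimes> (s \<otimes> s)" using sC by (simp add: m_assoc)
    finally have "s \<otimes> c \<otimes> s = (s \<otimes> s) \<otimes> (s \<otimes> s)" .
    then have "s \<otimes> c \<otimes> s = \<one>" using btype[OF s] cc by simp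
    then have "inv s = s \<otimes> c" using sC cC by (simp add: inv_equality)
    then show ?thesis using Sinv s by metis
  qed
  have nb: "?adj z c" if z: "?adj \<one> z" for z
  proof -
    have zC: "z \<in> carrier G" and "inv z \<in> S" using z unfolding cayley_adj_def by auto
    then have "inv (inv z) \<in> S" using Sinv by blast
    then have "z \<in> S" using zC by simp
    then have "z \<otimes> inv c \<in> S" using sc invc by simp
    then show ?thesis using zC cC unfolding cayley_adj_def by simp
  qed
  obtain n' where wn': "walk_len ?adj n' \<one> c" using D.conn cC by blast
  have "n' \<noteq> 0" using wn' cne by (cases n') auto
  then obtain z where z: "?adj \<one> z" using wn' by (cases n') auto
  have "walk_len ?adj 2 \<one> c" using z nb[OF z] by (auto simp: numeral_eq_Suc)
  then have le2: "gdist ?adj \<one> c \<le> 2" by (rule D.gd_le)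
  have "gdist ?adj \<one> c \<noteq> 0" using D.gd0 cC cne by simp
  moreover have "\<not> ?adj \<one> c" using cS invc cC unfolding cayley_adj_def by simp
  then have "gdist ?adj \<one> c \<noteq> 1" using D.gd1[of "\<one>" c] cC by simp
  ultimately have "gdist ?adj \<one> c = 2" using le2 by linarith
  then show False using D.main[of "\<one>" c] cC nb by blast
qed


theorem proposition5p3:
  fixes G :: "('a, 'b) monoid_scheme" and m :: nat and a b :: 'a
  assumes "odd m"
    and "is_dicyclic G m a b"
  shows "\<not> (\<exists>S k \<mu>. S \<subseteq> carrier G - {\<one>\<^bsub>G\<^esub>} \<and> (\<forall>s\<in>S. inv\<^bsub>G\<^esub> s \<in> S) \<and>
            k < 2 * m - 1 \<and>
            distance_regular (carrier G) (cayley_adj G S) 3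
              (\<lambda>i. if i = 0 then k else if i = 1 then k - 1 else k - \<mu>)
              (\<lambda>i. if i = 1 then 1 else if i = 2 then \<mu> else k))"
proof
  assume "\<exists>S k \<mu>. S \<subseteq> carrier G - {\<one>\<^bsub>G\<^esub>} \<and> (\<forall>s\<in>S. inv\<^bsub>G\<^esub> s \<in> S) \<and>
            k < 2 * m - 1 \<and>
            distance_regular (carrier G) (cayley_adj G S) 3
              (\<lambda>i. if i = 0 then k else if i = 1 then k - 1 else k - \<mu>)
              (\<lambda>i. if i = 1 then 1 else if i = 2 then \<mu> else k)"
  then obtain S k \<mu> where S: "S \<subseteq> carrier G - {\<one>\<^bsub>G\<^esub>}" and Sinv: "\<forall>s\<in>S. inv\<^bsub>G\<^esub> s \<in> S"
    and DR: "distance_regular (carrier G) (cayley_adj G S) 3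
              (\<lambda>i. if i = 0 then k else if i = 1 then k - 1 else k - \<mu>)
              (\<lambda>i. if i = 1 then 1 else if i = 2 then \<mu> else k)" by blast
  have "group G" and "a \<in> carrier G" and "b \<in> carrier G"
    and "carrier G = generate G {a, b}" and "card (carrier G) = 4 * m"
    and "a [^]\<^bsub>G\<^esub> (2 * m) = \<one>\<^bsub>G\<^esub>" and "a [^]\<^bsub>G\<^esub> m = b [^]\<^bsub>G\<^esub> (2::nat)"
    and "inv\<^bsub>G\<^esub> b \<otimes>\<^bsub>G\<^esub> a \<otimes>\<^bsub>G\<^esub> b = inv\<^bsub>G\<^esub> a"
    using assms(2) unfolding is_dicyclic_def by auto
  then show False using group.main_lem[of G m a b S k \<mu>] assms(1) S Sinv DR by blast
qed


end
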